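(* Let $V=\mathbb{F}_2^s$ and let $\circ$ and $\diamond$ be two alternative operations on $V$ with $\dim W_\circ=\dim W_\diamond=s-3$, with translation groups $T_\circ$ and $T_\diamond$. Then there exists $g\in\mathrm{GL}(V)$ such that $T_\diamond=T_\circ^g$ if and only if $\dim U_\circ=\dim U_\diamond$.
   Context: An alternative operation on $V$ is defined from an elementary abelian $2$-subgroup $T<\mathrm{AGL}(V,+)$ acting regularly on $V$: with $\tau_a$ the unique element of $T$ sending $0$ to $a$ (postfix notation), $a\circ b:=a\tau_b$, and $T_\circ:=T$. It is assumed that the xor-translations $x\mapsto x+a$ lie in the normaliser of $T$ in $\mathrm{Sym}(V)$. The weak key space is $W_\circ=\{k: x\circ k=x+k\ \forall x\}$; the product is $a\cdot b=a+b+a\circ b$ and the error space is $U_\circ=\{a\cdot b: a,b\in V\}$. For $g\in\mathrm{GL}(V)$, $T^g:=gTg^{-1}$. *)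

theory Defs
  imports "HOL-Analysis.Analysis" "HOL-Library.Z2"
begin

text \<open>Permutations are functions V \<Rightarrow> V; the paper writes them postfix, so the postfix
product s t (first s, then t) is the function t \<circ> s.\<close>

type_synonym 's V = "bit ^ 's"

definition GL :: "('s::finite V \<Rightarrow> 's V) set" where
  "GL = {g. Vector_Spaces.linear (*s) (*s) g \<and> bij g}"

definition AGL :: "('s::finite V \<Rightarrow> 's V) set" where
  "AGL = {f. \<exists>L c. L \<in> GL \<and> f = (\<lambda>x. L x + c)}"

definition xor_tr :: "'s::finite V \<Rightarrow> 's V \<Rightarrow> 's V" where
  "xor_tr a = (\<lambda>x. x + a)"

definition translation_group :: "('s::finite V \<Rightarrow> 's V) set \<Rightarrow> bool" where
  "translation_group T \<longleftrightarrow>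
     T \<subseteq> AGL \<and> id \<in> T \<and>
     (\<forall>t\<in>T. \<forall>u\<in>T. t \<circ> u \<in> T) \<and>
     (\<forall>t\<in>T. inv t \<in> T) \<and>
     (\<forall>t\<in>T. \<forall>u\<in>T. t \<circ> u = u \<circ> t) \<and>
     (\<forall>t\<in>T. t \<circ> t = id) \<and>
     (\<forall>a b. \<exists>!t. t \<in> T \<and> t a = b) \<and>
     (\<forall>a. (\<lambda>t. xor_tr a \<circ> t \<circ> inv (xor_tr a)) ` T = T)"

definition tau :: "('s::finite V \<Rightarrow> 's V) set \<Rightarrow> 's V \<Rightarrow> ('s V \<Rightarrow> 's V)" where
  "tau T a = (THE t. t \<in> T \<and> t 0 = a)"

definition circ_op :: "('s::finite V \<Rightarrow> 's V) set \<Rightarrow> 's V \<Rightarrow> 's V \<Rightarrow> 's V" where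
  "circ_op T a b = tau T b a"

definition weak_keys :: "('s::finite V \<Rightarrow> 's V) set \<Rightarrow> 's V set" where
  "weak_keys T = {k. \<forall>x. circ_op T x k = x + k}"

definition dot_op :: "('s::finite V \<Rightarrow> 's V) set \<Rightarrow> 's V \<Rightarrow> 's V \<Rightarrow> 's V" where
  "dot_op T a b = a + b + circ_op T a b"

definition error_space :: "('s::finite V \<Rightarrow> 's V) set \<Rightarrow> 's V set" where
  "error_space T = {dot_op T a b | a b. True}"

text \<open>T^g := g T g^{-1} in postfix notation, i.e. x \<mapsto> (x g) t g^{-1}.\<close>
definition conj_grp :: "('s::finite V \<Rightarrow> 's V) \<Rightarrow> ('s V \<Rightarrow> 's V) set \<Rightarrow> ('s V \<Rightarrow> 's V) set" where
  "conj_grp g T = (\<lambda>t. inv g \<circ> t \<circ> g) ` T"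

end

theory Submission
  imports Defs
begin

lemma smult_bit: "(c::bit) *s (v::bit^'n) = (if c = 0 then 0 else v)"
  by (cases c) auto

lemma vplus_self[simp]: "(v::bit^'n) + v = 0"
proof -
  have "\<And>x::bit. x + x = 0" by (case_tac x) auto
  then show ?thesis by (simp add: vec_eq_iff)
qed

lemma vplus_self2[simp]: "(v::bit^'n) + (v + w) = w"
  by (simp add: add.assoc[symmetric])

lemma vuminus[simp]: "- (v::bit^'n) = v"
  by (simp add: vec_eq_iff)

lemma vminus[simp]: "(v::bit^'n) - w = v + w"
  by (simp add: vec_eq_iff)

definition addf :: "(bit^'n::finite \<Rightarrow> bit^'m::finite) \<Rightarrow> bool" where
  "addf f \<longleftrightarrow> (\<forall>x y. f (x+y) = f x + f y)"

lemma addf_0: "addf f \<Longrightarrow> f 0 = 0"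
  unfolding addf_def by (metis add_cancel_right_right add_0)

lemma linear_iff_addf: "Vector_Spaces.linear (*s) (*s) (f::bit^'n::finite \<Rightarrow> bit^'m::finite) \<longleftrightarrow> addf f"
proof
  assume "Vector_Spaces.linear (*s) (*s) f"
  then show "addf f" unfolding addf_def Vector_Spaces.linear_iff by blast
next
  assume a: "addf f"
  then have "f 0 = 0" by (rule addf_0)
  with a show "Vector_Spaces.linear (*s) (*s) f"
    unfolding addf_def Vector_Spaces.linear_iff
    by (auto simp: smult_bit vec.vector_space_axioms)
qed

lemma span_insert_bit: "x \<in> vec.span (insert (a::bit^'n) S) \<longleftrightarrow> x \<in> vec.span S \<or> x + a \<in> vec.span S"
proof -
  have "x \<in> vec.span (insert a S) \<longleftrightarrow> (\<exists>k. x - k *s a \<in> vec.span S)"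
    unfolding vec.span_insert by simp
  also have "\<dots> \<longleftrightarrow> (\<exists>k::bit. x + (if k = 0 then 0 else a) \<in> vec.span S)"
  proof -
    have "\<And>k. x - k *s a = x + (if k = 0 then 0 else a)"
      by (simp add: smult_bit)
    then show ?thesis by simp
  qed
  also have "\<dots> \<longleftrightarrow> x \<in> vec.span S \<or> x + a \<in> vec.span S"
  proof
    assume "\<exists>k::bit. x + (if k = 0 then 0 else a) \<in> vec.span S"
    then obtain k :: bit where "x + (if k = 0 then 0 else a) \<in> vec.span S" by blast
    then show "x \<in> vec.span S \<or> x + a \<in> vec.span S" by (cases "k = 0") auto
  next
    assume "x \<in> vec.span S \<or> x + a \<in> vec.span S"
    then show "\<exists>k::bit. x + (if k = 0 then 0 else a) \<in> vec.span S"
    proof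
      assume "x \<in> vec.span S" then show ?thesis by (intro exI[of _ 0]) simp
    next
      assume "x + a \<in> vec.span S" then show ?thesis by (intro exI[of _ 1]) simp
    qed
  qed
  finally show ?thesis .
qed

lemma plus_eq0: "(x::bit^'n) + b = 0 \<longleftrightarrow> x = b"
proof
  assume "x + b = 0"
  then have "x + b = b + b" by simp
  then show "x = b" by (rule add_right_imp_eq)
qed simp

lemma span_single_bit: "vec.span {b::bit^'n} = {0, b}"
proof -
  have "x \<in> vec.span {b} \<longleftrightarrow> x = 0 \<or> x = b" for x
    using span_insert_bit[of x b "{}"] by (simp add: plus_eq0)
  then show ?thesis by blast
qed

lemma indep2: "a \<noteq> 0 \<Longrightarrow> b \<noteq> 0 \<Longrightarrow> a \<noteq> b \<Longrightarrow> vec.independent {a::bit^'n, b}"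
  by (simp add: vec.independent_insert span_single_bit)

lemma indep3: "a \<noteq> 0 \<Longrightarrow> b \<noteq> 0 \<Longrightarrow> c \<noteq> 0 \<Longrightarrow> a \<noteq> b \<Longrightarrow> a \<noteq> c \<Longrightarrow> b \<noteq> c \<Longrightarrow> a + b \<noteq> c
   \<Longrightarrow> vec.independent {a::bit^'n, b, c}"
proof -
  assume as: "a \<noteq> 0" "b \<noteq> 0" "c \<noteq> 0" "a \<noteq> b" "a \<noteq> c" "b \<noteq> c" "a + b \<noteq> c"
  have "a \<notin> vec.span {b, c}"
  proof
    assume "a \<in> vec.span {b, c}"
    then have "a \<in> vec.span {c} \<or> a + b \<in> vec.span {c}" by (rule span_insert_bit[THEN iffD1])
    then show False using as by (simp add: span_single_bit plus_eq0)
  qed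
  moreover have "vec.independent {b, c}" using as indep2 by blast
  ultimately show ?thesis using as by (simp add: vec.independent_insert)
qed

lemma subspace_bit: "vec.subspace (S::(bit^'n) set) \<longleftrightarrow> 0 \<in> S \<and> (\<forall>x\<in>S. \<forall>y\<in>S. x + y \<in> S)"
  unfolding vec.subspace_def by (auto simp: smult_bit)

lemma span_addf_closed:
  assumes "addf f" "\<forall>u\<in>B. f u \<in> S" "vec.subspace S" "a \<in> vec.span B"
  shows "f a \<in> S"
proof -
  have "vec.subspace {a. f a \<in> S}"
    using assms(1,3) by (auto simp: subspace_bit addf_def addf_0)
  then show ?thesis using vec.span_induct[OF assms(4), of "\<lambda>a. f a \<in> S"] assms(2) by simp
qed

lemma bil_span:
  assumes "\<forall>b. addf (\<lambda>a. f a b)" "\<forall>a. addf (f a)" "\<forall>u\<in>B. \<forall>v\<in>B. f u v \<in> S"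
    "vec.subspace S" "a \<in> vec.span B" "b \<in> vec.span B"
  shows "f a b \<in> S"
proof -
  have "\<forall>u\<in>B. f u b \<in> S"
  proof
    fix u assume "u \<in> B"
    then show "f u b \<in> S" using span_addf_closed[of "f u" B S b] assms by simp
  qed
  then show ?thesis
    using span_addf_closed[of "\<lambda>a. f a b" B S a] assms by simp
qed

lemma sp2: "a \<in> S \<Longrightarrow> b \<in> S \<Longrightarrow> c = a + b \<Longrightarrow> c \<in> vec.span S"
  by (simp add: vec.span_add vec.span_base)

lemma sp1: "a \<in> S \<Longrightarrow> a \<in> vec.span S"
  by (simp add: vec.span_base)

lemma dimUNIV: "vec.dim (UNIV :: (bit^'n::finite) set) = CARD('n)"
  by (simp add: card_cart_basis)

locale palg =
  fixes d :: "bit^'n::finite \<Rightarrow> bit^'n \<Rightarrow> bit^'n"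
  assumes ladd: "d (a+b) c = d a c + d b c"
  and comm: "d a b = d b a"
  and alt: "d a a = 0"
  and nil: "d x (d a b) = 0"
begin

lemma radd: "d a (b+c) = d a b + d a c"
  using ladd comm by metis

lemma d0[simp]: "d 0 b = 0" "d a 0 = 0"
  using ladd[of 0 0 b] radd[of a 0 0] by auto

lemma addf1: "addf (\<lambda>a. d a b)" and addf2: "addf (d a)"
  by (auto simp: addf_def ladd radd)

definition W where "W = {k. \<forall>x. d x k = 0}"

lemma W_subspace: "vec.subspace W"
  by (auto simp: subspace_bit W_def radd)

lemma dW: "k \<in> W \<Longrightarrow> d x k = 0" "k \<in> W \<Longrightarrow> d k x = 0"
  using comm by (auto simp: W_def)

lemma prod_W: "d a b \<in> W"
  by (simp add: W_def nil)

lemma ANN: assumes "vec.span E = UNIV" "\<forall>b\<in>E. d v b = 0" shows "v \<in> W"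
proof -
  have "d v x \<in> {0}" for x
    using span_addf_closed[of "d v" E "{0}" x] assms addf2 by (auto simp: subspace_bit)
  then show ?thesis by (auto simp: W_def comm)
qed

definition NF where
  "NF x y z Q \<longleftrightarrow> vec.independent (insert x (insert y (insert z Q))) \<and>
     vec.span (insert x (insert y (insert z Q))) = UNIV \<and> finite Q \<and>
     card (insert x (insert y (insert z Q))) = CARD('n) \<and> card Q + 3 = CARD('n) \<and>
     Q \<subseteq> W \<and> d x z \<in> Q \<and> d y z \<in> Q \<and> d x z \<noteq> d y z \<and>
     (d x y = 0 \<or> (d x y \<in> Q \<and> d x y \<noteq> d x z \<and> d x y \<noteq> d y z))"

lemma card_ins_le: "finite A \<Longrightarrow> card (insert a A) \<le> Suc (card A)"
  by (simp add: card_insert_if)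

lemma card_ins_eq: "finite A \<Longrightarrow> card (insert a A) = Suc (card A) \<Longrightarrow> a \<notin> A"
  by (auto simp: insert_absorb)

lemma card3_distinct:
  assumes "finite Q" "card (insert x (insert y (insert z Q))) = card Q + 3"
  shows "x \<noteq> y" "x \<noteq> z" "y \<noteq> z" "x \<notin> Q" "y \<notin> Q" "z \<notin> Q"
proof -
  have f: "finite (insert z Q)" "finite (insert y (insert z Q))" using assms(1) by auto
  note l1 = card_ins_le[OF assms(1), of z] and l2 = card_ins_le[OF f(1), of y]
    and l3 = card_ins_le[OF f(2), of x]
  have e1: "card (insert z Q) = Suc (card Q)" using l1 l2 l3 assms(2) by linarith
  have e2: "card (insert y (insert z Q)) = Suc (card (insert z Q))" using l1 l2 l3 assms(2) by linarith
  have e3: "card (insert x (insert y (insert z Q))) = Suc (card (insert y (insert z Q)))" using l1 l2 l3 assms(2) by linarith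
  have "z \<notin> Q" "y \<notin> insert z Q" "x \<notin> insert y (insert z Q)"
    using card_ins_eq[OF assms(1) e1] card_ins_eq[OF f(1) e2] card_ins_eq[OF f(2) e3] .
  then show "x \<noteq> y" "x \<noteq> z" "y \<noteq> z" "x \<notin> Q" "y \<notin> Q" "z \<notin> Q" by simp_all
qed


lemma NF_basic:
  assumes "NF x y z Q"
  shows "x \<noteq> y" "x \<noteq> z" "y \<noteq> z" "x \<notin> Q" "y \<notin> Q" "z \<notin> Q" "0 \<notin> Q"
    "vec.independent Q"
proof -
  have fQ: "finite Q" and c1: "card (insert x (insert y (insert z Q))) = CARD('n)"
    and c2: "card Q + 3 = CARD('n)"
    using assms unfolding NF_def by blast+
  have c: "card (insert x (insert y (insert z Q))) = card Q + 3" using c1 c2 by linarith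
  show "x \<noteq> y" "x \<noteq> z" "y \<noteq> z" "x \<notin> Q" "y \<notin> Q" "z \<notin> Q"
    using card3_distinct[OF fQ c] by simp_all
  have "vec.independent (insert x (insert y (insert z Q)))" using assms unfolding NF_def by blast
  then show iQ: "vec.independent Q" using vec.independent_mono[of _ Q] by blast
  then show "0 \<notin> Q" using vec.dependent_zero[of Q] by blast
qed

lemma NF_dim:
  assumes nf: "NF x y z Q"
  shows "vec.dim {d a b | a b. True} = (if d x y = 0 then 2 else 3)"
proof -
  define E where "E = insert x (insert y (insert z Q))"
  define P where "P = {d x y, d x z, d y z}"
  have spE: "vec.span E = UNIV" and QW: "Q \<subseteq> W" and xz: "d x z \<in> Q" and yz: "d y z \<in> Q"
    and ne: "d x z \<noteq> d y z" and xy: "d x y = 0 \<or> (d x y \<in> Q \<and> d x y \<noteq> d x z \<and> d x y \<noteq> d y z)"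
    using nf unfolding NF_def E_def by blast+
  note nb = NF_basic[OF nf]
  have inP: "d u v \<in> vec.span P" if "u \<in> E" "v \<in> E" for u v
  proof (cases "u \<in> Q \<or> v \<in> Q")
    case True
    then have "d u v = 0" using QW dW by blast
    then show ?thesis by (simp add: vec.span_zero)
  next
    case False
    then have "u \<in> {x, y, z}" "v \<in> {x, y, z}" using that unfolding E_def by auto
    then have "d u v \<in> insert 0 P" unfolding P_def by (auto simp: alt comm)
    moreover have "insert 0 P \<subseteq> vec.span P" by (simp add: vec.span_zero vec.span_superset)
    ultimately show ?thesis by blast
  qed
  have img: "{d a b | a b. True} \<subseteq> vec.span P"
  proof safe
    fix a b
    show "d a b \<in> vec.span P"
      using bil_span[of d E "vec.span P" a b] addf1 addf2 inP spE by simp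
  qed
  have Pimg: "P \<subseteq> {d a b | a b. True}" unfolding P_def by blast
  have "vec.span {d a b | a b. True} = vec.span P"
  proof
    show "vec.span {d a b | a b. True} \<subseteq> vec.span P"
      using img by (simp add: vec.span_minimal)
    show "vec.span P \<subseteq> vec.span {d a b | a b. True}"
      using Pimg by (rule vec.span_mono)
  qed
  then have "vec.dim {d a b | a b. True} = vec.dim P" by (rule vec.span_eq_dim)
  also have "\<dots> = vec.dim (P - {0})"
    by (rule vec.span_eq_dim) simp
  also have "\<dots> = card (P - {0})"
  proof (rule vec.dim_eq_card_independent)
    have "P - {0} \<subseteq> Q" using xz yz xy unfolding P_def by auto
    then show "vec.independent (P - {0})" by (rule vec.independent_mono[OF nb(8)])
  qed
  also have "\<dots> = (if d x y = 0 then 2 else 3)"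
  proof (cases "d x y = 0")
    case True
    have "d x z \<noteq> 0" "d y z \<noteq> 0" using xz yz nb(7) by auto
    then have "P - {0} = {d x z, d y z}" using True unfolding P_def by auto
    then show ?thesis using True ne by simp
  next
    case False
    have "d x z \<noteq> 0" "d y z \<noteq> 0" using xz yz nb(7) by auto
    then have "P - {0} = {d x y, d x z, d y z}" using False unfolding P_def by auto
    then show ?thesis using False ne xy by simp
  qed
  finally show ?thesis .
qed


lemma NF_D:
  assumes nf: "NF x y z Q"
  shows "vec.independent (insert x (insert y (insert z Q)))"
    "vec.span (insert x (insert y (insert z Q))) = UNIV" "finite Q" "card Q + 3 = CARD('n)"
    "Q \<subseteq> W" "d x z \<in> Q" "d y z \<in> Q" "d x z \<noteq> d y z"
    "d x y = 0 \<or> (d x y \<in> Q \<and> d x y \<noteq> d x z \<and> d x y \<noteq> d y z)"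
  using nf unfolding NF_def by blast+

lemma NF_P:
  assumes nf: "NF x y z Q"
  shows "{d x y, d x z, d y z} - {0} \<subseteq> Q"
    "card ({d x y, d x z, d y z} - {0}) = (if d x y = 0 then 2 else 3)"
proof -
  have xz: "d x z \<in> Q" and yz: "d y z \<in> Q"
    and ne: "d x z \<noteq> d y z" and xy: "d x y = 0 \<or> (d x y \<in> Q \<and> d x y \<noteq> d x z \<and> d x y \<noteq> d y z)"
    using nf unfolding NF_def by blast+
  note nb = NF_basic[OF nf]
  show "{d x y, d x z, d y z} - {0} \<subseteq> Q" using xz yz xy by auto
  have "d x z \<noteq> 0" "d y z \<noteq> 0" using xz yz nb(7) by auto
  then show "card ({d x y, d x z, d y z} - {0}) = (if d x y = 0 then 2 else 3)"
  proof (cases "d x y = 0")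
    case True
    then have "{d x y, d x z, d y z} - {0} = {d x z, d y z}" using \<open>d x z \<noteq> 0\<close> \<open>d y z \<noteq> 0\<close> by auto
    then show ?thesis using True ne by simp
  next
    case False
    then have "{d x y, d x z, d y z} - {0} = {d x y, d x z, d y z}" using \<open>d x z \<noteq> 0\<close> \<open>d y z \<noteq> 0\<close> by auto
    then show ?thesis using False ne xy by simp
  qed
qed

end

locale palg3 = palg d for d :: "bit^'n::finite \<Rightarrow> bit^'n \<Rightarrow> bit^'n" +
  fixes BW
  assumes BW_sub: "BW \<subseteq> W" and BW_ind: "vec.independent BW" and BW_span: "W \<subseteq> vec.span BW"
  and dimW: "vec.dim W + 3 = CARD('n)"
begin

lemma BW_fin: "finite BW"
  using BW_ind by (rule vec.finiteI_independent)

lemma BW_card: "card BW + 3 = CARD('n)"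
  using vec.basis_card_eq_dim[OF BW_sub BW_span BW_ind] dimW by simp

definition H where "H x y z \<longleftrightarrow> vec.span (insert x (insert y (insert z BW))) = UNIV"

lemma H_props:
  assumes "H x y z"
  shows "vec.independent (insert x (insert y (insert z BW)))"
    "x \<noteq> y" "x \<noteq> z" "y \<noteq> z" "x \<notin> BW" "y \<notin> BW" "z \<notin> BW"
proof -
  define E where "E = insert x (insert y (insert z BW))"
  have fE: "finite E" using BW_fin unfolding E_def by simp
  have f: "finite (insert z BW)" "finite (insert y (insert z BW))" using BW_fin by auto
  have le: "card E \<le> card BW + 3"
    using card_ins_le[OF BW_fin, of z] card_ins_le[OF f(1), of y] card_ins_le[OF f(2), of x]
    unfolding E_def by linarith
  have sp: "UNIV \<subseteq> vec.span E" using assms unfolding H_def E_def by simp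
  have ge: "vec.dim (UNIV :: (bit^'n) set) \<le> card E"
    using vec.span_card_ge_dim[OF subset_UNIV sp fE] .
  have ceq: "card E = card BW + 3" using le ge BW_card dimUNIV[where 'n='n] by linarith
  show "vec.independent (insert x (insert y (insert z BW)))"
    using vec.card_le_dim_spanning[OF subset_UNIV sp fE] ceq BW_card dimUNIV[where 'n='n]
    unfolding E_def by simp
  show "x \<noteq> y" "x \<noteq> z" "y \<noteq> z" "x \<notin> BW" "y \<notin> BW" "z \<notin> BW"
    using card3_distinct[OF BW_fin ceq[unfolded E_def]] by auto
qed

lemma H_change:
  assumes "H e1 e2 e3"
    "e1 \<in> vec.span (insert x (insert y (insert z BW)))"
    "e2 \<in> vec.span (insert x (insert y (insert z BW)))"
    "e3 \<in> vec.span (insert x (insert y (insert z BW)))"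
  shows "H x y z"
proof -
  have "insert e1 (insert e2 (insert e3 BW)) \<subseteq> vec.span (insert x (insert y (insert z BW)))"
    using assms(2-4) vec.span_base[of _ "insert x (insert y (insert z BW))"] by auto
  then have "vec.span (insert e1 (insert e2 (insert e3 BW))) \<subseteq> vec.span (insert x (insert y (insert z BW)))"
    by (simp add: vec.span_minimal)
  then show ?thesis using assms(1) unfolding H_def by auto
qed

lemma NOTW:
  assumes h: "H x y z" and u: "u \<in> vec.span (insert y (insert z BW))"
  shows "x + u \<notin> W"
proof
  assume xu: "x + u \<in> W"
  note hp = H_props[OF h]
  have e: "insert x (insert y (insert z BW)) - {x} = insert y (insert z BW)"
    using hp by auto
  have "x \<notin> vec.span (insert y (insert z BW))"
    using hp(1) e unfolding vec.dependent_def by auto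
  moreover have "x + u \<in> vec.span (insert y (insert z BW))"
    using xu BW_span vec.span_mono[of BW "insert y (insert z BW)"] by auto
  then have "(x + u) + u \<in> vec.span (insert y (insert z BW))"
    by (rule vec.span_add) (rule u)
  ultimately show False by (simp add: add.assoc)
qed

lemma NOT0:
  assumes h: "H x y z" and u: "u \<in> vec.span (insert y (insert z BW))"
  shows "\<not> (d (x+u) x = 0 \<and> d (x+u) y = 0 \<and> d (x+u) z = 0)"
proof
  assume a: "d (x+u) x = 0 \<and> d (x+u) y = 0 \<and> d (x+u) z = 0"
  have "\<forall>b\<in>insert x (insert y (insert z BW)). d (x+u) b = 0"
    using a BW_sub dW by auto
  then have "x + u \<in> W" by (rule ANN[OF h[unfolded H_def]])
  then show False using NOTW[OF h u] by blast
qed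

lemma BASE:
  assumes h: "H x y z" and xy: "d x y = 0"
  shows "d x z \<noteq> 0" "d y z \<noteq> 0" "d x z \<noteq> d y z"
proof -
  have h2: "H y x z" using h unfolding H_def by (simp add: insert_commute)
  show "d x z \<noteq> 0" using NOT0[OF h vec.span_zero] xy by (simp add: alt)
  show "d y z \<noteq> 0" using NOT0[OF h2 vec.span_zero] xy by (simp add: alt comm)
  have "y \<in> vec.span (insert y (insert z BW))" by (simp add: vec.span_base)
  from NOT0[OF h this] xy have "d x z + d y z \<noteq> 0" by (simp add: alt comm ladd radd)
  then show "d x z \<noteq> d y z" by auto
qed


lemma MK:
  assumes h: "H x y z" and ind: "vec.independent ({d x y, d x z, d y z} - {0})"
    and xz: "d x z \<noteq> 0" and yz: "d y z \<noteq> 0" and ne: "d x z \<noteq> d y z"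
    and xy: "d x y = 0 \<or> (d x y \<noteq> d x z \<and> d x y \<noteq> d y z)"
  shows "\<exists>Q. NF x y z Q"
proof -
  define P where "P = {d x y, d x z, d y z} - {0}"
  have PW: "P \<subseteq> W" unfolding P_def using prod_W by blast
  obtain Q where PQ: "P \<subseteq> Q" and QW: "Q \<subseteq> W" and iQ: "vec.independent Q" and WQ: "W \<subseteq> vec.span Q"
    using vec.maximal_independent_subset_extend[OF PW ind[folded P_def]] by blast
  have fQ: "finite Q" using iQ by (rule vec.finiteI_independent)
  have cQ: "card Q + 3 = CARD('n)"
    using vec.basis_card_eq_dim[OF QW WQ iQ] dimW by simp
  define E where "E = insert x (insert y (insert z Q))"
  have fE: "finite E" using fQ unfolding E_def by simp
  have "insert x (insert y (insert z BW)) \<subseteq> vec.span E"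
  proof -
    have "BW \<subseteq> vec.span Q" using BW_sub WQ by blast
    also have "vec.span Q \<subseteq> vec.span E" unfolding E_def by (rule vec.span_mono) blast
    finally have "BW \<subseteq> vec.span E" .
    moreover have "{x, y, z} \<subseteq> vec.span E" unfolding E_def
      using vec.span_superset[of "insert x (insert y (insert z Q))"] by blast
    ultimately show ?thesis by blast
  qed
  then have "vec.span (insert x (insert y (insert z BW))) \<subseteq> vec.span E"
    by (simp add: vec.span_minimal)
  then have sp: "UNIV \<subseteq> vec.span E" using h unfolding H_def by simp
  then have spE: "vec.span E = UNIV" by blast
  have f: "finite (insert z Q)" "finite (insert y (insert z Q))" using fQ by auto
  have le: "card E \<le> card Q + 3"
    using card_ins_le[OF fQ, of z] card_ins_le[OF f(1), of y] card_ins_le[OF f(2), of x]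
    unfolding E_def by linarith
  have ge: "vec.dim (UNIV :: (bit^'n) set) \<le> card E"
    using vec.span_card_ge_dim[OF subset_UNIV sp fE] .
  have ceq: "card E = CARD('n)" using le ge cQ dimUNIV[where 'n='n] by linarith
  have iE: "vec.independent E"
    using vec.card_le_dim_spanning[OF subset_UNIV sp fE] ceq dimUNIV[where 'n='n] by simp
  have "d x z \<in> Q" "d y z \<in> Q" using PQ xz yz unfolding P_def by auto
  moreover have "d x y = 0 \<or> (d x y \<in> Q \<and> d x y \<noteq> d x z \<and> d x y \<noteq> d y z)"
    using xy PQ unfolding P_def by auto
  ultimately have "NF x y z Q" unfolding NF_def E_def[symmetric]
    using iE spE fQ ceq cQ QW ne by (intro conjI) assumption+
  then show ?thesis by blast
qed

lemma MK2:
  assumes h: "H x y z" and xy: "d x y = 0"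
  shows "\<exists>Q. NF x y z Q"
proof -
  note b = BASE[OF h xy]
  have "{d x y, d x z, d y z} - {0} = {d x z, d y z}" using xy b by auto
  then have "vec.independent ({d x y, d x z, d y z} - {0})" using indep2[OF b] by simp
  then show ?thesis using MK[OF h _ b] xy by blast
qed

lemma MK3:
  assumes h: "H x y z" and nz: "d x y \<noteq> 0" "d x z \<noteq> 0" "d y z \<noteq> 0"
    and ne: "d x y \<noteq> d x z" "d x y \<noteq> d y z" "d x z \<noteq> d y z" "d x y + d x z \<noteq> d y z"
  shows "\<exists>Q. NF x y z Q"
proof -
  have "{d x y, d x z, d y z} - {0} = {d x y, d x z, d y z}" using nz by auto
  then have "vec.independent ({d x y, d x z, d y z} - {0})" using indep3[OF nz ne] by simp
  then show ?thesis using MK[OF h _ nz(2,3) ne(3)] ne by blast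
qed

lemma EXIST: "\<exists>x y z Q. NF x y z Q"
proof -
  define B where "B = vec.extend_basis BW"
  have BWB: "BW \<subseteq> B" unfolding B_def by (rule vec.extend_basis_superset[OF BW_ind])
  have iB: "vec.independent B" unfolding B_def by (rule vec.independent_extend_basis[OF BW_ind])
  have spB: "UNIV \<subseteq> vec.span B" unfolding B_def using vec.span_extend_basis[OF BW_ind] by simp
  have fB: "finite B" using iB by (rule vec.finiteI_independent)
  have cB: "card B = CARD('n)"
    using vec.basis_card_eq_dim[OF subset_UNIV spB iB] dimUNIV[where 'n='n] by simp
  have "card (B - BW) = card B - card BW" using card_Diff_subset[OF BW_fin BWB] .
  then have "card (B - BW) = 3" using cB BW_card by linarith
  then obtain e1 e2 e3 where e: "B - BW = {e1, e2, e3}" unfolding card_3_iff by blast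
  have "B = insert e1 (insert e2 (insert e3 BW))" using e BWB by blast
  then have h: "H e1 e2 e3" unfolding H_def using spB by auto
  let ?S = "\<lambda>x y z. vec.span (insert x (insert y (insert z BW)))"
  have b: "a \<in> ?S a b c" "b \<in> ?S a b c" "c \<in> ?S a b c" for a b c
    by (simp_all add: vec.span_base)
  have ch: "H x y z" if "e1 \<in> ?S x y z" "e2 \<in> ?S x y z" "e3 \<in> ?S x y z" for x y z
    using H_change[OF h that] .
  show ?thesis
  proof (cases "d e1 e2 = 0")
    case True then show ?thesis using MK2[OF h] by blast
  next
    case n12: False
    show ?thesis
    proof (cases "d e1 e3 = 0")
      case True
      have "H e1 e3 e2" by (rule ch) (rule b)+
      then show ?thesis using MK2 True by blast
    next
      case n13: False
      show ?thesis
      proof (cases "d e2 e3 = 0")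
        case True
        have "H e2 e3 e1" by (rule ch) (rule b)+
        then show ?thesis using MK2 True by blast
      next
        case n23: False
        show ?thesis
        proof (cases "d e1 e2 = d e1 e3")
          case True
          have "H e1 (e2 + e3) e2"
          proof (rule ch)
            show "e3 \<in> ?S e1 (e2 + e3) e2" by (rule sp2[of "e2 + e3" _ e2]) (simp_all add: add_ac)
          qed (rule b)+
          moreover have "d e1 (e2 + e3) = 0" using True by (simp add: radd)
          ultimately show ?thesis using MK2 by blast
        next
          case n1213: False
          show ?thesis
          proof (cases "d e1 e2 = d e2 e3")
            case True
            have "H e2 (e1 + e3) e1"
            proof (rule ch)
              show "e3 \<in> ?S e2 (e1 + e3) e1" by (rule sp2[of "e1 + e3" _ e1]) (simp_all add: add_ac)
            qed (rule b)+
            moreover have "d e2 (e1 + e3) = 0" using True by (simp add: radd comm)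
            ultimately show ?thesis using MK2 by blast
          next
            case n1223: False
            show ?thesis
            proof (cases "d e1 e3 = d e2 e3")
              case True
              have "H e3 (e1 + e2) e1"
              proof (rule ch)
                show "e2 \<in> ?S e3 (e1 + e2) e1" by (rule sp2[of "e1 + e2" _ e1]) (simp_all add: add_ac)
              qed (rule b)+
              moreover have "d e3 (e1 + e2) = 0" using True by (simp add: radd comm)
              ultimately show ?thesis using MK2 by blast
            next
              case n1323: False
              show ?thesis
              proof (cases "d e1 e2 + d e1 e3 = d e2 e3")
                case True
                have "H (e1 + e3) (e2 + e3) e3"
                proof (rule ch)
                  show "e1 \<in> ?S (e1 + e3) (e2 + e3) e3" by (rule sp2[of "e1 + e3" _ e3]) (simp_all add: add_ac)
                  show "e2 \<in> ?S (e1 + e3) (e2 + e3) e3" by (rule sp2[of "e2 + e3" _ e3]) (simp_all add: add_ac)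
                qed (rule b)
                moreover have "d (e1 + e3) (e2 + e3) = 0"
                proof -
                  have "d (e1 + e3) (e2 + e3) = (d e1 e2 + d e1 e3) + d e2 e3"
                    by (simp add: radd ladd comm alt add_ac)
                  then show ?thesis using True by simp
                qed
                ultimately show ?thesis using MK2 by blast
              next
                case False
                then show ?thesis using MK3[OF h n12 n13 n23 n1213 n1223 n1323] by blast
              qed
            qed
          qed
        qed
      qed
    qed
  qed
qed

end


lemma ISO:
  fixes d1 d2 :: "bit^'n::finite \<Rightarrow> bit^'n \<Rightarrow> bit^'n"
  assumes A1: "palg d1" and A2: "palg d2"
  and N1: "palg.NF d1 x1 y1 z1 Q1" and N2: "palg.NF d2 x2 y2 z2 Q2"
  and Z: "d1 x1 y1 = 0 \<longleftrightarrow> d2 x2 y2 = 0"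
  shows "\<exists>g\<in>GL. \<forall>a b. g (d2 a b) = d1 (g a) (g b)"
proof -
  interpret p1: palg d1 by (rule A1)
  interpret p2: palg d2 by (rule A2)
  define B1 where "B1 = insert x1 (insert y1 (insert z1 Q1))"
  define B2 where "B2 = insert x2 (insert y2 (insert z2 Q2))"
  define P1 where "P1 = {d1 x1 y1, d1 x1 z1, d1 y1 z1} - {0}"
  define P2 where "P2 = {d2 x2 y2, d2 x2 z2, d2 y2 z2} - {0}"
  have iB1: "vec.independent B1" and spB1: "vec.span B1 = UNIV" and fQ1: "finite Q1"
    and cQ1: "card Q1 + 3 = CARD('n)" and QW1: "Q1 \<subseteq> p1.W" and xz1: "d1 x1 z1 \<in> Q1"
    and yz1: "d1 y1 z1 \<in> Q1" and ne1: "d1 x1 z1 \<noteq> d1 y1 z1"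
    and xy1: "d1 x1 y1 = 0 \<or> (d1 x1 y1 \<in> Q1 \<and> d1 x1 y1 \<noteq> d1 x1 z1 \<and> d1 x1 y1 \<noteq> d1 y1 z1)"
    using p1.NF_D[OF N1, folded B1_def] by blast+
  have iB2: "vec.independent B2" and spB2: "vec.span B2 = UNIV" and fQ2: "finite Q2"
    and cQ2: "card Q2 + 3 = CARD('n)" and QW2: "Q2 \<subseteq> p2.W" and xz2: "d2 x2 z2 \<in> Q2"
    and yz2: "d2 y2 z2 \<in> Q2" and ne2: "d2 x2 z2 \<noteq> d2 y2 z2"
    and xy2: "d2 x2 y2 = 0 \<or> (d2 x2 y2 \<in> Q2 \<and> d2 x2 y2 \<noteq> d2 x2 z2 \<and> d2 x2 y2 \<noteq> d2 y2 z2)"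
    using p2.NF_D[OF N2, folded B2_def] by blast+
  note nb1 = p1.NF_basic[OF N1] and nb2 = p2.NF_basic[OF N2]
  note pp1 = p1.NF_P[OF N1, folded P1_def] and pp2 = p2.NF_P[OF N2, folded P2_def]
  have cP: "card P1 = card P2" using pp1(2) pp2(2) Z by simp
  have "card (Q2 - P2) = card (Q1 - P1)"
    using card_Diff_subset[OF finite_subset[OF pp1(1) fQ1] pp1(1)]
      card_Diff_subset[OF finite_subset[OF pp2(1) fQ2] pp2(1)] cP cQ1 cQ2 by linarith
  then obtain k where k: "bij_betw k (Q2 - P2) (Q1 - P1)"
    using finite_same_card_bij[of "Q2 - P2" "Q1 - P1"] fQ1 fQ2 by blast
  define F where "F v = (if v = x2 then x1 else if v = y2 then y1 else if v = z2 then z1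
    else if v = d2 x2 z2 then d1 x1 z1 else if v = d2 y2 z2 then d1 y1 z1
    else if v = d2 x2 y2 then d1 x1 y1 else k v)" for v
  define g where "g = vec.construct B2 F"
  have lin: "Vector_Spaces.linear (*s) (*s) g" unfolding g_def by (rule vec.linear_construct[OF iB2])
  then have ag: "addf g" by (simp add: linear_iff_addf)
  have g0: "g 0 = 0" using ag by (rule addf_0)
  have gF: "g b = F b" if "b \<in> B2" for b unfolding g_def by (rule vec.construct_basis[OF iB2 that])
  have gx: "g x2 = x1" using gF[of x2] unfolding B2_def F_def by simp
  have gy: "g y2 = y1" using gF[of y2] nb2 unfolding B2_def F_def by simp
  have gz: "g z2 = z1" using gF[of z2] nb2 unfolding B2_def F_def by simp
  have gxz: "g (d2 x2 z2) = d1 x1 z1"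
  proof -
    have "d2 x2 z2 \<noteq> x2" "d2 x2 z2 \<noteq> y2" "d2 x2 z2 \<noteq> z2" using xz2 nb2 by auto
    then show ?thesis using gF[of "d2 x2 z2"] xz2 unfolding B2_def F_def by simp
  qed
  have gyz: "g (d2 y2 z2) = d1 y1 z1"
  proof -
    have "d2 y2 z2 \<noteq> x2" "d2 y2 z2 \<noteq> y2" "d2 y2 z2 \<noteq> z2" using yz2 nb2 by auto
    then show ?thesis using gF[of "d2 y2 z2"] yz2 ne2 unfolding B2_def F_def by simp
  qed
  have gxy: "g (d2 x2 y2) = d1 x1 y1"
  proof (cases "d2 x2 y2 = 0")
    case True
    then show ?thesis using g0 Z by simp
  next
    case False
    then have m: "d2 x2 y2 \<in> Q2" "d2 x2 y2 \<noteq> d2 x2 z2" "d2 x2 y2 \<noteq> d2 y2 z2" using xy2 by auto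
    then have "d2 x2 y2 \<noteq> x2" "d2 x2 y2 \<noteq> y2" "d2 x2 y2 \<noteq> z2" using nb2 by auto
    then show ?thesis using gF[of "d2 x2 y2"] m unfolding B2_def F_def by simp
  qed
  have FQ: "F v \<in> Q1" if v: "v \<in> Q2" for v
  proof -
    have nv: "v \<noteq> x2" "v \<noteq> y2" "v \<noteq> z2" using v nb2 by auto
    show ?thesis
    proof (cases "v = d2 x2 z2 \<or> v = d2 y2 z2 \<or> v = d2 x2 y2")
      case True
      moreover have "d2 x2 y2 \<noteq> 0 \<Longrightarrow> d1 x1 y1 \<in> Q1" using xy1 Z by auto
      moreover have "v \<noteq> 0" using v nb2 by auto
      ultimately show ?thesis using nv xz1 yz1 unfolding F_def by auto
    next
      case False
      then have "v \<in> Q2 - P2" using v unfolding P2_def by auto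
      moreover have "k ` (Q2 - P2) = Q1 - P1" using k by (simp add: bij_betw_def)
      ultimately have "k v \<in> Q1 - P1" by blast
      then show ?thesis using nv False unfolding F_def by auto
    qed
  qed
  have B1F: "B1 \<subseteq> g ` B2"
  proof
    fix w assume w: "w \<in> B1"
    have "w \<in> F ` B2"
    proof -
      have "x1 = F x2" unfolding F_def by simp
      moreover have "y1 = F y2" using nb2 unfolding F_def by simp
      moreover have "z1 = F z2" using nb2 unfolding F_def by simp
      moreover have "w \<in> Q1 \<Longrightarrow> w \<in> F ` Q2"
      proof -
        assume wq: "w \<in> Q1"
        show "w \<in> F ` Q2"
        proof (cases "w \<in> P1")
          case True
          then have "w = d1 x1 y1 \<or> w = d1 x1 z1 \<or> w = d1 y1 z1" and w0: "w \<noteq> 0"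
            unfolding P1_def by auto
          then show ?thesis
          proof (elim disjE)
            assume "w = d1 x1 y1"
            then have "d2 x2 y2 \<noteq> 0" using w0 Z by auto
            then have m: "d2 x2 y2 \<in> Q2" "d2 x2 y2 \<noteq> d2 x2 z2" "d2 x2 y2 \<noteq> d2 y2 z2" using xy2 by auto
            then have "d2 x2 y2 \<noteq> x2" "d2 x2 y2 \<noteq> y2" "d2 x2 y2 \<noteq> z2" using nb2 by auto
            then have "F (d2 x2 y2) = w" using m \<open>w = d1 x1 y1\<close> unfolding F_def by simp
            then show ?thesis using m by blast
          next
            assume "w = d1 x1 z1"
            have "d2 x2 z2 \<noteq> x2" "d2 x2 z2 \<noteq> y2" "d2 x2 z2 \<noteq> z2" using xz2 nb2 by auto
            then have "F (d2 x2 z2) = w" using \<open>w = d1 x1 z1\<close> unfolding F_def by simp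
            then show ?thesis using xz2 by blast
          next
            assume "w = d1 y1 z1"
            have "d2 y2 z2 \<noteq> x2" "d2 y2 z2 \<noteq> y2" "d2 y2 z2 \<noteq> z2" using yz2 nb2 by auto
            then have "F (d2 y2 z2) = w" using \<open>w = d1 y1 z1\<close> ne2 unfolding F_def by simp
            then show ?thesis using yz2 by blast
          qed
        next
          case False
          then have "w \<in> Q1 - P1" using wq by simp
          moreover have "k ` (Q2 - P2) = Q1 - P1" using k by (simp add: bij_betw_def)
          ultimately have "w \<in> k ` (Q2 - P2)" by simp
          then obtain u where u: "u \<in> Q2 - P2" "k u = w" by (auto elim!: imageE)
          have "u \<noteq> x2" "u \<noteq> y2" "u \<noteq> z2" using u nb2 by auto
          moreover have "u \<noteq> d2 x2 z2" "u \<noteq> d2 y2 z2" "u \<noteq> d2 x2 y2"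
            using u nb2(7) unfolding P2_def by auto
          ultimately have "F u = w" using u unfolding F_def by simp
          then show ?thesis using u by blast
        qed
      qed
      ultimately show ?thesis using w unfolding B1_def B2_def by blast
    qed
    then show "w \<in> g ` B2" using gF by force
  qed
  interpret lg: Vector_Spaces.linear "(*s)" "(*s)" g by (rule lin)
  have "UNIV = vec.span B1" using spB1 by simp
  also have "\<dots> \<subseteq> vec.span (g ` B2)" using B1F by (rule vec.span_mono)
  also have "\<dots> = g ` vec.span B2" by (rule lg.span_image)
  finally have surj: "surj g" by blast
  have inj: "inj g" by (rule vec.linear_surjective_imp_injective[OF lin surj]) simp
  have gGL: "g \<in> GL" unfolding GL_def using lin inj surj by (simp add: bij_def)
  have base: "g (d2 u v) = d1 (g u) (g v)" if u: "u \<in> B2" and v: "v \<in> B2" for u v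
  proof (cases "u \<in> Q2 \<or> v \<in> Q2")
    case True
    then show ?thesis
    proof
      assume uq: "u \<in> Q2"
      then have "d2 u v = 0" using QW2 p2.dW by blast
      moreover have "g u \<in> Q1" using gF[OF u] FQ[OF uq] by simp
      then have "d1 (g u) (g v) = 0" using QW1 p1.dW by blast
      ultimately show ?thesis using g0 by simp
    next
      assume vq: "v \<in> Q2"
      then have "d2 u v = 0" using QW2 p2.dW by blast
      moreover have "g v \<in> Q1" using gF[OF v] FQ[OF vq] by simp
      then have "d1 (g u) (g v) = 0" using QW1 p1.dW by blast
      ultimately show ?thesis using g0 by simp
    qed
  next
    case False
    then have uv: "u \<in> {x2, y2, z2}" "v \<in> {x2, y2, z2}" using u v unfolding B2_def by auto
    have c1: "d1 a b = d1 b a" and c2: "d2 a b = d2 b a" for a b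
      using p1.comm p2.comm by blast+
    show ?thesis using uv
      by (auto simp: gx gy gz gxy gxz gyz g0 p1.alt p2.alt c1[of y1 x1] c1[of z1 x1] c1[of z1 y1]
        c2[of y2 x2] c2[of z2 x2] c2[of z2 y2])
  qed
  have "g (d2 a b) + d1 (g a) (g b) \<in> {0}" for a b
  proof (rule bil_span[of "\<lambda>a b. g (d2 a b) + d1 (g a) (g b)" B2 "{0}" a b])
    show "\<forall>b. addf (\<lambda>a. g (d2 a b) + d1 (g a) (g b))"
      using ag unfolding addf_def by (simp add: p1.ladd p2.ladd add_ac)
    show "\<forall>a. addf (\<lambda>b. g (d2 a b) + d1 (g a) (g b))"
      using ag unfolding addf_def by (simp add: p1.radd p2.radd add_ac)
    show "\<forall>u\<in>B2. \<forall>v\<in>B2. g (d2 u v) + d1 (g u) (g v) \<in> {0}" using base by simp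
    show "vec.subspace {0::bit^'n}" by (simp add: subspace_bit)
  qed (simp_all add: spB2)
  then have "\<forall>a b. g (d2 a b) = d1 (g a) (g b)" by (simp add: plus_eq0)
  then show ?thesis using gGL by blast
qed



lemma TG_D:
  assumes "translation_group T"
  shows "T \<subseteq> AGL" "\<forall>t\<in>T. \<forall>u\<in>T. t \<circ> u = u \<circ> t" "\<forall>t\<in>T. t \<circ> t = id"
    "\<forall>a b. \<exists>!t. t \<in> T \<and> t a = b"
    "\<forall>a. (\<lambda>t. xor_tr a \<circ> t \<circ> inv (xor_tr a)) ` T = T"
proof -
  note c = assms[unfolded translation_group_def]
  show "T \<subseteq> AGL" by (rule c[THEN conjunct1])
  show "\<forall>t\<in>T. \<forall>u\<in>T. t \<circ> u = u \<circ> t"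
    by (rule c[THEN conjunct2, THEN conjunct2, THEN conjunct2, THEN conjunct2, THEN conjunct1])
  show "\<forall>t\<in>T. t \<circ> t = id"
    by (rule c[THEN conjunct2, THEN conjunct2, THEN conjunct2, THEN conjunct2, THEN conjunct2, THEN conjunct1])
  show "\<forall>a b. \<exists>!t. t \<in> T \<and> t a = b"
    by (rule c[THEN conjunct2, THEN conjunct2, THEN conjunct2, THEN conjunct2, THEN conjunct2, THEN conjunct2, THEN conjunct1])
  show "\<forall>a. (\<lambda>t. xor_tr a \<circ> t \<circ> inv (xor_tr a)) ` T = T"
    by (rule c[THEN conjunct2, THEN conjunct2, THEN conjunct2, THEN conjunct2, THEN conjunct2, THEN conjunct2, THEN conjunct2])
qed

lemma tau_in:
  assumes "translation_group T"
  shows "tau T b \<in> T" "tau T b 0 = b"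
proof -
  have "\<exists>!t. t \<in> T \<and> t 0 = b" by (rule TG_D(4)[OF assms, rule_format])
  then have "tau T b \<in> T \<and> tau T b 0 = b" unfolding tau_def by (rule theI')
  then show "tau T b \<in> T" "tau T b 0 = b" by blast+
qed

lemma tau_uniq:
  assumes "translation_group T" "t \<in> T"
  shows "t = tau T (t 0)"
proof -
  have "\<exists>!u. u \<in> T \<and> u 0 = t 0" by (rule TG_D(4)[OF assms(1), rule_format])
  then show ?thesis unfolding tau_def using assms(2) by (simp add: the1_equality)
qed

lemma tau_exp: "tau T b x = x + b + dot_op T x b"
  unfolding dot_op_def circ_op_def by (simp add: add_ac)

lemma GL_facts:
  assumes "g \<in> GL"
  shows "addf g" "g 0 = 0" "\<And>x. inv g (g x) = x" "\<And>y. g (inv g y) = y" "bij g"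
    "Vector_Spaces.linear (*s) (*s) g"
proof -
  have lin: "Vector_Spaces.linear (*s) (*s) g" and b: "bij g" using assms unfolding GL_def by auto
  then show "Vector_Spaces.linear (*s) (*s) g" "bij g" by auto
  show ag: "addf g" using lin by (simp add: linear_iff_addf)
  then show "g 0 = 0" by (rule addf_0)
  show "\<And>x. inv g (g x) = x" using b by (simp add: bij_def)
  show "\<And>y. g (inv g y) = y" using b by (simp add: bij_def surj_f_inv_f)
qed

lemma TG_ladd:
  assumes T: "translation_group T"
  shows "dot_op T (a + b) c = dot_op T a c + dot_op T b c"
proof -
  have "tau T c \<in> AGL" using TG_D(1)[OF T] tau_in(1)[OF T, of c] by blast
  then obtain L k where L: "L \<in> GL" and tk: "tau T c = (\<lambda>x. L x + k)" unfolding AGL_def by blast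
  have aL: "addf L" and L0: "L 0 = 0" using GL_facts[OF L] by auto
  have "tau T c 0 = L 0 + k" using tk by simp
  then have "k = c" using tau_in(2)[OF T, of c] L0 by simp
  then have dx: "dot_op T x c = x + L x" for x
    unfolding dot_op_def circ_op_def tk by (simp add: add_ac)
  show ?thesis unfolding dx using aL unfolding addf_def by (simp add: add_ac)
qed

lemma TG_comm:
  assumes T: "translation_group T"
  shows "dot_op T a b = dot_op T b a"
proof -
  have "tau T a \<circ> tau T b = tau T b \<circ> tau T a"
    using TG_D(2)[OF T] tau_in(1)[OF T, of a] tau_in(1)[OF T, of b] by blast
  then have "(tau T a \<circ> tau T b) 0 = (tau T b \<circ> tau T a) 0" by (rule arg_cong)
  then have "tau T a (tau T b 0) = tau T b (tau T a 0)" by simp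
  then have "tau T a b = tau T b a" using tau_in(2)[OF T] by simp
  then show ?thesis unfolding dot_op_def circ_op_def by (simp add: add_ac)
qed

lemma TG_alt:
  assumes T: "translation_group T"
  shows "dot_op T a a = 0"
proof -
  have "tau T a \<circ> tau T a = id"
    using TG_D(3)[OF T] tau_in(1)[OF T, of a] by blast
  then have "(tau T a \<circ> tau T a) 0 = id 0" by (rule arg_cong)
  then have "tau T a (tau T a 0) = 0" by simp
  then have "tau T a a = 0" using tau_in(2)[OF T] by simp
  then show ?thesis unfolding dot_op_def circ_op_def by simp
qed

lemma xor_inv: "inv (xor_tr c) = xor_tr (c::bit^'n::finite)"
proof (rule inv_unique_comp)
  show "xor_tr c \<circ> xor_tr c = id" by (auto simp: xor_tr_def add.assoc)
  then show "xor_tr c \<circ> xor_tr c = id" .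
qed

lemma TG_nil:
  assumes T: "translation_group T"
  shows "dot_op T x (dot_op T c a) = 0"
proof -
  let ?d = "dot_op T"
  have radd: "?d u (v + w) = ?d u v + ?d u w" for u v w
    using TG_ladd[OF T] TG_comm[OF T] by metis
  define f where "f = xor_tr c \<circ> tau T a \<circ> inv (xor_tr c)"
  have "f \<in> (\<lambda>t. xor_tr c \<circ> t \<circ> inv (xor_tr c)) ` T" unfolding f_def using tau_in(1)[OF T] by blast
  then have fT: "f \<in> T" using TG_D(5)[OF T, rule_format, of c] by simp
  have fx: "f y = tau T a (y + c) + c" for y unfolding f_def xor_inv by (simp add: xor_tr_def)
  have "f = tau T (f 0)" by (rule tau_uniq[OF T fT])
  then have "f x = tau T (f 0) x" by simp
  then have "tau T a (x + c) + c = tau T (tau T a c + c) x" unfolding fx by simp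
  moreover have "tau T a c + c = a + ?d c a" unfolding tau_exp by (simp add: add_ac)
  ultimately have "tau T a (x + c) + c = tau T (a + ?d c a) x" by simp
  then have "(x + c) + a + ?d (x + c) a + c = x + (a + ?d c a) + ?d x (a + ?d c a)"
    unfolding tau_exp .
  then have "x + a + ?d x a + ?d c a = x + a + ?d c a + ?d x a + ?d x (?d c a)"
    by (simp add: TG_ladd[OF T] radd add_ac)
  then have "x + a + ?d x a + ?d c a + ?d x (?d c a) = x + a + ?d x a + ?d c a"
    by (simp add: add_ac)
  then show ?thesis by (metis add_cancel_left_right)
qed

lemma TG_palg: assumes T: "translation_group T" shows "palg (dot_op T)"
  by unfold_locales (rule TG_ladd[OF T] TG_comm[OF T] TG_alt[OF T] TG_nil[OF T])+

lemma TG_W: "translation_group T \<Longrightarrow> weak_keys T = palg.W (dot_op T)"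
proof -
  assume T: "translation_group T"
  interpret palg "dot_op T" by (rule TG_palg[OF T])
  have e: "circ_op T x k = (x + k) + dot_op T x k" for x k unfolding circ_op_def by (rule tau_exp)
  show ?thesis unfolding weak_keys_def W_def e by simp
qed

lemma conj_iff:
  assumes T1: "translation_group T1" and T2: "translation_group T2" and g: "g \<in> GL"
  shows "T2 = conj_grp g T1 \<longleftrightarrow> (\<forall>x y. g (dot_op T2 x y) = dot_op T1 (g x) (g y))"
proof -
  note gf = GL_facts[OF g]
  have gadd: "g (u + v) = g u + g v" for u v using gf(1) unfolding addf_def by blast
  show ?thesis
  proof
    assume eq: "T2 = conj_grp g T1"
    show "\<forall>x y. g (dot_op T2 x y) = dot_op T1 (g x) (g y)"
    proof (intro allI)
      fix x b
      have "tau T2 b \<in> conj_grp g T1" using tau_in(1)[OF T2] eq by simp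
      then obtain t where t: "t \<in> T1" "tau T2 b = inv g \<circ> t \<circ> g" unfolding conj_grp_def by blast
      have "b = inv g (t 0)" using tau_in(2)[OF T2, of b] t(2) gf(2) by simp
      then have "t 0 = g b" using gf(4) by simp
      then have tt: "t = tau T1 (g b)" using tau_uniq[OF T1 t(1)] by simp
      have "g (tau T2 b x) = tau T1 (g b) (g x)" using t(2) tt gf(4) by simp
      then have "g x + g b + g (dot_op T2 x b) = g x + g b + dot_op T1 (g x) (g b)"
        unfolding tau_exp gadd .
      then show "g (dot_op T2 x b) = dot_op T1 (g x) (g b)" by simp
    qed
  next
    assume iso: "\<forall>x y. g (dot_op T2 x y) = dot_op T1 (g x) (g y)"
    have key: "inv g \<circ> tau T1 (g b) \<circ> g = tau T2 b" for b
    proof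
      fix x
      have "(inv g \<circ> tau T1 (g b) \<circ> g) x = inv g (g x + g b + g (dot_op T2 x b))"
        unfolding tau_exp using iso by simp
      also have "\<dots> = inv g (g (x + b + dot_op T2 x b))" by (simp add: gadd)
      also have "\<dots> = tau T2 b x" unfolding tau_exp gf(3) ..
      finally show "(inv g \<circ> tau T1 (g b) \<circ> g) x = tau T2 b x" .
    qed
    show "T2 = conj_grp g T1"
    proof
      show "T2 \<subseteq> conj_grp g T1"
      proof
        fix t assume t: "t \<in> T2"
        then have "t = inv g \<circ> tau T1 (g (t 0)) \<circ> g" using key tau_uniq[OF T2 t] by simp
        then show "t \<in> conj_grp g T1" unfolding conj_grp_def using tau_in(1)[OF T1] by blast
      qed
      show "conj_grp g T1 \<subseteq> T2"
      proof
        fix t' assume "t' \<in> conj_grp g T1"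
        then obtain t where t: "t \<in> T1" "t' = inv g \<circ> t \<circ> g" unfolding conj_grp_def by blast
        define c where "c = t 0"
        have tt: "t = tau T1 (g (inv g c))" using tau_uniq[OF T1 t(1)] gf(4) unfolding c_def by simp
        have "t' = inv g \<circ> tau T1 (g (inv g c)) \<circ> g" using t(2) tt by simp
        then have "t' = tau T2 (inv g c)" using key[of "inv g c"] by simp
        then show "t' \<in> T2" using tau_in(1)[OF T2] by simp
      qed
    qed
  qed
qed

lemma palg3I:
  assumes T: "translation_group (T :: ('s::finite V \<Rightarrow> 's V) set)"
    and dim: "vec.dim (weak_keys T) + 3 = CARD('s)"
  shows "\<exists>x y z Q. palg.NF (dot_op T) x y z Q"
proof -
  interpret palg "dot_op T" by (rule TG_palg[OF T])
  obtain B where B: "B \<subseteq> W" "vec.independent B" "W \<subseteq> vec.span B" "card B = vec.dim W"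
    using vec.basis_exists[of W] by blast
  interpret palg3 "dot_op T" B
    by unfold_locales (use B dim TG_W[OF T] in auto)
  show ?thesis by (rule EXIST)
qed

theorem theorem7:
  fixes T1 T2 :: "('s::finite V \<Rightarrow> 's V) set"
  assumes "translation_group T1" and "translation_group T2"
    and "vec.dim (weak_keys T1) + 3 = CARD('s)"
    and "vec.dim (weak_keys T2) + 3 = CARD('s)"
  shows "(\<exists>g\<in>GL. T2 = conj_grp g T1) \<longleftrightarrow>
         vec.dim (error_space T1) = vec.dim (error_space T2)"
proof -
  note T1 = assms(1) and T2 = assms(2)
  interpret p1: palg "dot_op T1" by (rule TG_palg[OF T1])
  interpret p2: palg "dot_op T2" by (rule TG_palg[OF T2])
  have es1: "error_space T1 = {dot_op T1 a b | a b. True}" unfolding error_space_def ..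
  have es2: "error_space T2 = {dot_op T2 a b | a b. True}" unfolding error_space_def ..
  obtain x1 y1 z1 Q1 where N1: "p1.NF x1 y1 z1 Q1" using palg3I[OF T1 assms(3)] by blast
  obtain x2 y2 z2 Q2 where N2: "p2.NF x2 y2 z2 Q2" using palg3I[OF T2 assms(4)] by blast
  have D1: "vec.dim (error_space T1) = (if dot_op T1 x1 y1 = 0 then 2 else 3)"
    unfolding es1 by (rule p1.NF_dim[OF N1])
  have D2: "vec.dim (error_space T2) = (if dot_op T2 x2 y2 = 0 then 2 else 3)"
    unfolding es2 by (rule p2.NF_dim[OF N2])
  show ?thesis
  proof
    assume "\<exists>g\<in>GL. T2 = conj_grp g T1"
    then obtain g where g: "g \<in> GL" "T2 = conj_grp g T1" by blast
    have iso: "\<forall>x y. g (dot_op T2 x y) = dot_op T1 (g x) (g y)"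
      using conj_iff[OF T1 T2 g(1)] g(2) by blast
    note gf = GL_facts[OF g(1)]
    have "error_space T1 = g ` error_space T2"
    proof
      show "error_space T1 \<subseteq> g ` error_space T2"
      proof
        fix w assume "w \<in> error_space T1"
        then obtain a b where w: "w = dot_op T1 a b" unfolding es1 by blast
        have "w = g (dot_op T2 (inv g a) (inv g b))" using iso gf(4) w by simp
        then show "w \<in> g ` error_space T2" unfolding es2 by blast
      qed
      show "g ` error_space T2 \<subseteq> error_space T1"
        using iso unfolding es1 es2 by auto
    qed
    moreover have "inj_on g (vec.span (error_space T2))"
      using gf(5) by (simp add: bij_def inj_on_subset[of g UNIV])
    ultimately show "vec.dim (error_space T1) = vec.dim (error_space T2)"
      using vec.dim_image_eq[OF gf(6)] by simp
  next
    assume "vec.dim (error_space T1) = vec.dim (error_space T2)"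
    then have Z: "dot_op T1 x1 y1 = 0 \<longleftrightarrow> dot_op T2 x2 y2 = 0" using D1 D2 by (auto split: if_splits)
    obtain g where g: "g \<in> GL" "\<forall>a b. g (dot_op T2 a b) = dot_op T1 (g a) (g b)"
      using ISO[OF TG_palg[OF T1] TG_palg[OF T2] N1 N2 Z] by blast
    then show "\<exists>g\<in>GL. T2 = conj_grp g T1" using conj_iff[OF T1 T2 g(1)] by blast
  qed
qed

end
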